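(* Assume (H3) with a common penalty function $g$ that is positively 1-homogeneous ($g(\lambda x)=\lambda g(x)$ for all $\lambda\ge0$, $x\le 0$). Let $c\in[0,u]$ be a constant and consider the $(d+1)$-dimensional risk vector $(c,X_1,\ldots,X_d)$ whose first component is deterministic and equal to $c$. Assume (H1) holds for the indicator $I$ associated with $(c,X_1,\ldots,X_d)$ and capital $u$ (on $\mathcal{U}^{d+1}_u$), and for the indicator $I$ associated with $(X_1,\ldots,X_d)$ and capital $u-c$ (on $\mathcal{U}^{d}_{u-c}$). Then $A_{c,X_1,\ldots,X_d}(u)=(c,A_{X_1,\ldots,X_d}(u-c))$, the concatenation of $c$ with the vector $A_{X_1,\ldots,X_d}(u-c)$.
   Context: For a random vector $\mathbf Y=(Y_1,\ldots,Y_m)$ of nonnegative random variables and a capital $w\ge 0$, let $\mathcal{U}^m_w=\{v\in[0,w]^m:\sum_k v_k=w\}$ and define the indicator $I_{\mathbf Y,w}(v)=\sum_{k=1}^m \mathbb{E}[g_k(v_k-Y_k)\mathbf 1_{\{Y_k>v_k\}}\mathbf 1_{\{\sum_{l=1}^m Y_l\le w\}}]$, $v\in\mathcal{U}^m_w$, where the penalty functions $g_k:(-\infty,0]\to[0,\infty)$ are $C^1$, convex, with $g_k(0)=0$. (H1): $I_{\mathbf Y,w}$ has a unique minimizer on $\mathcal{U}^m_w$, denoted $A_{Y_1,\ldots,Y_m}(w)$ (the optimal allocation). (H3): all penalty functions equal a common $g$. Here $(X_1,\ldots,X_d)$ is a vector of nonnegative random variables and $u\ge0$. *)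

theory Defs
  imports "HOL-Probability.Probability"
begin

definition alloc_set :: "nat \<Rightarrow> real \<Rightarrow> real list set" where
  "alloc_set m w = {v. length v = m \<and> (\<forall>k<m. 0 \<le> v ! k \<and> v ! k \<le> w) \<and> sum_list v = w}"

definition indicator_fn ::
  "'a measure \<Rightarrow> (real \<Rightarrow> real) \<Rightarrow> ('a \<Rightarrow> real) list \<Rightarrow> real \<Rightarrow> real list \<Rightarrow> real" where
  "indicator_fn M g Y w v =
     (\<Sum>k<length Y. integral\<^sup>L M (\<lambda>\<omega>.
        g (v ! k - (Y ! k) \<omega>)
        * indicator {\<omega>. (Y ! k) \<omega> > v ! k} \<omega>
        * indicator {\<omega>. (\<Sum>l<length Y. (Y ! l) \<omega>) \<le> w} \<omega>))"

definition is_minimizer ::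
  "'a measure \<Rightarrow> (real \<Rightarrow> real) \<Rightarrow> ('a \<Rightarrow> real) list \<Rightarrow> real \<Rightarrow> real list \<Rightarrow> bool" where
  "is_minimizer M g Y w v \<longleftrightarrow> v \<in> alloc_set (length Y) w \<and>
     (\<forall>v'\<in>alloc_set (length Y) w. indicator_fn M g Y w v \<le> indicator_fn M g Y w v')"

definition H1 :: "'a measure \<Rightarrow> (real \<Rightarrow> real) \<Rightarrow> ('a \<Rightarrow> real) list \<Rightarrow> real \<Rightarrow> bool" where
  "H1 M g Y w \<longleftrightarrow> (\<exists>!v. is_minimizer M g Y w v)"

definition opt_alloc :: "'a measure \<Rightarrow> (real \<Rightarrow> real) \<Rightarrow> ('a \<Rightarrow> real) list \<Rightarrow> real \<Rightarrow> real list" where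
  "opt_alloc M g Y w = (THE v. is_minimizer M g Y w v)"

definition penalty_fn :: "(real \<Rightarrow> real) \<Rightarrow> bool" where
  "penalty_fn g \<longleftrightarrow>
     (\<exists>g'. continuous_on {..0} g' \<and>
        (\<forall>x\<in>{..0}. (g has_real_derivative g' x) (at x within {..0}))) \<and>
     convex_on {..0} g \<and> (\<forall>x\<le>0. 0 \<le> g x) \<and> g 0 = 0"

end

theory Submission imports Defs begin

definition JX :: "'a measure \<Rightarrow> ('a \<Rightarrow> real) list \<Rightarrow> real \<Rightarrow> real list \<Rightarrow> real" where
  "JX M X t v = (\<Sum>k<length X. \<integral>\<omega>. max ((X!k) \<omega> - v!k) 0 * indicator {\<omega>. (\<Sum>l<length X. (X!l) \<omega>) \<le> t} \<omega> \<partial>M)"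

lemma meas_ind:
  fixes X :: "('a \<Rightarrow> real) list"
  assumes "\<forall>k<length X. X ! k \<in> borel_measurable M"
  shows "(\<lambda>\<omega>. indicator {\<omega>. (\<Sum>l<length X. (X!l) \<omega>) \<le> t} \<omega> :: real) \<in> borel_measurable M"
proof -
  have "(\<lambda>\<omega>. (\<Sum>l<length X. (X!l) \<omega>)) \<in> borel_measurable M" using assms by (intro borel_measurable_sum) auto
  then show ?thesis by measurable
qed

lemma integ_ind:
  fixes X :: "('a \<Rightarrow> real) list"
  assumes "prob_space M" "\<forall>k<length X. X ! k \<in> borel_measurable M"
  shows "integrable M (\<lambda>\<omega>. indicator {\<omega>. (\<Sum>l<length X. (X!l) \<omega>) \<le> t} \<omega> :: real)"
proof -
  interpret prob_space M by fact
  show ?thesis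
    by (rule integrable_const_bound[where B=1]) (auto simp: meas_ind[OF assms(2)])
qed

lemma integ_f:
  fixes X :: "('a \<Rightarrow> real) list"
  assumes "prob_space M" "\<forall>k<length X. X ! k \<in> borel_measurable M"
    "\<forall>k<length X. \<forall>\<omega>\<in>space M. 0 \<le> (X ! k) \<omega>" "k < length X"
  shows "integrable M (\<lambda>\<omega>. max ((X!k) \<omega> - r) 0 * indicator {\<omega>. (\<Sum>l<length X. (X!l) \<omega>) \<le> t} \<omega>)"
proof -
  interpret prob_space M by fact
  have m: "X!k \<in> borel_measurable M" using assms by auto
  have b: "norm (max ((X!k) \<omega> - r) 0 * indicator {\<omega>. (\<Sum>l<length X. (X!l) \<omega>) \<le> t} \<omega>) \<le> \<bar>t\<bar> + \<bar>r\<bar>"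
    if w: "\<omega> \<in> space M" for \<omega>
  proof (cases "(\<Sum>l<length X. (X!l) \<omega>) \<le> t")
    case True
    have "(X!k) \<omega> \<le> (\<Sum>l<length X. (X!l) \<omega>)"
      by (rule member_le_sum) (use assms w in auto)
    then show ?thesis using True assms w by (auto simp: indicator_def)
  next
    case False then show ?thesis by (auto simp: indicator_def)
  qed
  show ?thesis
    by (rule integrable_const_bound[where B="\<bar>t\<bar> + \<bar>r\<bar>"])
       (use b in auto, intro borel_measurable_times m meas_ind[OF assms(2)] borel_measurable_max borel_measurable_diff, auto simp: m)
qed

lemma Lint:
  fixes X :: "('a \<Rightarrow> real) list"
  assumes P: "prob_space M" and ms: "\<forall>k<length X. X ! k \<in> borel_measurable M"
    and nn: "\<forall>k<length X. \<forall>\<omega>\<in>space M. 0 \<le> (X ! k) \<omega>"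
    and r: "(\<Sum>k<length X. max (v!k - w!k) 0) \<le> r"
  shows "JX M X t w \<le> JX M X t v + r * (\<integral>\<omega>. indicator {\<omega>. (\<Sum>l<length X. (X!l) \<omega>) \<le> t} \<omega> \<partial>M)"
proof -
  define A where "A = {\<omega>. (\<Sum>l<length X. (X!l) \<omega>) \<le> t}"
  have iA: "integrable M (\<lambda>\<omega>. indicator A \<omega> :: real)" unfolding A_def by (rule integ_ind[OF P ms])
  have iF: "integrable M (\<lambda>\<omega>. \<Sum>k<length X. max ((X!k) \<omega> - z!k) 0 * indicator A \<omega>)" for z
    unfolding A_def apply (rule Bochner_Integration.integrable_sum) apply (rule integ_f[OF P ms nn]) apply auto done
  have e1: "JX M X t z = (\<integral>\<omega>. (\<Sum>k<length X. max ((X!k) \<omega> - z!k) 0 * indicator A \<omega>) \<partial>M)" for z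
    unfolding JX_def A_def apply (rule Bochner_Integration.integral_sum[symmetric]) apply (rule integ_f[OF P ms nn]) apply auto done
  have pw: "(\<Sum>k<length X. max ((X!k) \<omega> - w!k) 0 * indicator A \<omega>)
      \<le> (\<Sum>k<length X. max ((X!k) \<omega> - v!k) 0 * indicator A \<omega>) + r * indicator A \<omega>" for \<omega>
  proof -
    have "(\<Sum>k<length X. max ((X!k) \<omega> - w!k) 0) \<le> (\<Sum>k<length X. max ((X!k) \<omega> - v!k) 0 + max (v!k - w!k) 0)"
      by (intro sum_mono) auto
    also have "\<dots> \<le> (\<Sum>k<length X. max ((X!k) \<omega> - v!k) 0) + r" using r by (simp add: sum.distrib)
    finally have "(\<Sum>k<length X. max ((X!k) \<omega> - w!k) 0) * indicator A \<omega> \<le> ((\<Sum>k<length X. max ((X!k) \<omega> - v!k) 0) + r) * indicator A \<omega>"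
      by (intro mult_right_mono) auto
    then show ?thesis by (simp add: sum_distrib_right distrib_right)
  qed
  have "JX M X t w \<le> (\<integral>\<omega>. (\<Sum>k<length X. max ((X!k) \<omega> - v!k) 0 * indicator A \<omega>) + r * indicator A \<omega> \<partial>M)"
    unfolding e1 by (intro integral_mono iF Bochner_Integration.integrable_add Bochner_Integration.integrable_mult_right iA pw)
  also have "\<dots> = JX M X t v + r * (\<integral>\<omega>. indicator A \<omega> \<partial>M)"
    unfolding e1 by (subst Bochner_Integration.integral_add) (rule iF, rule Bochner_Integration.integrable_mult_right, rule iA, simp)
  finally show ?thesis unfolding A_def .
qed

lemma gpos:
  assumes hom: "\<forall>t\<ge>0. \<forall>x\<le>0. g (t * x) = t * g x"
  shows "g (v - f \<omega>) * indicator {\<omega>. f \<omega> > v} \<omega> = g (-1) * max (f \<omega> - v) (0::real)"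
proof (cases "f \<omega> > v")
  case True
  have "g (v - f \<omega>) = (f \<omega> - v) * g (-1)" using hom[rule_format, of "f \<omega> - v" "-1"] True by simp
  then show ?thesis using True by simp
next
  case False then show ?thesis by simp
qed

lemma L1:
  assumes hom: "\<forall>t\<ge>0. \<forall>x\<le>0. g (t * x) = t * g x"
  shows "indicator_fn M g X t v = g (-1) * JX M X t v"
  unfolding indicator_fn_def JX_def sum_distrib_left
proof (rule sum.cong[OF refl])
  fix k
  show "(\<integral>\<omega>. g (v ! k - (X ! k) \<omega>) * indicator {\<omega>. v ! k < (X ! k) \<omega>} \<omega> * indicator {\<omega>. (\<Sum>l<length X. (X ! l) \<omega>) \<le> t} \<omega> \<partial>M)
    = g (- 1) * (\<integral>\<omega>. max ((X ! k) \<omega> - v ! k) 0 * indicator {\<omega>. (\<Sum>l<length X. (X ! l) \<omega>) \<le> t} \<omega> \<partial>M)"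
    unfolding gpos[OF hom, of "v!k" "X!k"] by (simp add: mult.assoc)
qed

lemma L2:
  assumes hom: "\<forall>t\<ge>0. \<forall>x\<le>0. g (t * x) = t * g x"
  shows "indicator_fn M g ((\<lambda>_. c) # X) u (v0 # v) = g (-1) * (max (c - v0) 0 * (\<integral>\<omega>. indicator {\<omega>. (\<Sum>l<length X. (X!l) \<omega>) \<le> u - c} \<omega> \<partial>M) + JX M X (u - c) v)"
proof -
  have s: "(\<Sum>l<length ((\<lambda>_. c) # X). (((\<lambda>_. c) # X) ! l) \<omega>) = c + (\<Sum>l<length X. (X!l) \<omega>)" for \<omega>
    by (simp only: length_Cons sum.lessThan_Suc_shift nth_Cons_0 nth_Cons_Suc)
  have e: "{\<omega>. c + (\<Sum>l<length X. (X!l) \<omega>) \<le> u} = {\<omega>. (\<Sum>l<length X. (X!l) \<omega>) \<le> u - c}" by auto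
  have "indicator_fn M g ((\<lambda>_. c) # X) u (v0 # v) =
     (\<integral>\<omega>. g (v0 - c) * indicator {\<omega>. c > v0} \<omega> * indicator {\<omega>. (\<Sum>l<length X. (X!l) \<omega>) \<le> u - c} \<omega> \<partial>M)
     + indicator_fn M g X (u - c) v"
    unfolding indicator_fn_def s e by (simp only: length_Cons sum.lessThan_Suc_shift nth_Cons_0 nth_Cons_Suc)
  also have "(\<integral>\<omega>. g (v0 - c) * indicator {\<omega>. c > v0} \<omega> * indicator {\<omega>. (\<Sum>l<length X. (X!l) \<omega>) \<le> u - c} \<omega> \<partial>M)
     = g (-1) * (max (c - v0) 0 * (\<integral>\<omega>. indicator {\<omega>. (\<Sum>l<length X. (X!l) \<omega>) \<le> u - c} \<omega> \<partial>M))"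
  proof -
    have p: "g (v0 - c) * indicator {\<omega>. c > v0} \<omega> = g (-1) * max (c - v0) 0" for \<omega> :: 'a
      using gpos[OF hom, of v0 "\<lambda>_. c" \<omega>] by simp
    show ?thesis unfolding p by (simp add: mult.assoc)
  qed
  finally show ?thesis unfolding L1[OF hom] by (simp add: distrib_left)
qed

lemma sumlist_idx: "sum_list (xs::real list) = (\<Sum>i<length xs. xs ! i)"
  by (simp add: sum_list_sum_nth atLeast0LessThan)

lemma alloc_mem:
  assumes "length w = n" "\<forall>k<n. 0 \<le> w!k" "(\<Sum>k<n. w!k) = (t::real)"
  shows "w \<in> alloc_set n t"
proof -
  have "w!k \<le> t" if "k < n" for k
    using assms that by (metis member_le_sum[of k "{..<n}" "\<lambda>k. w!k"] lessThan_iff finite_lessThan DiffD1)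
  then show ?thesis using assms unfolding alloc_set_def by (auto simp: sumlist_idx)
qed

lemma L3:
  fixes v :: "real list"
  assumes nn: "\<forall>k<length v. 0 \<le> v!k" and s: "sum_list v = s" and t: "0 \<le> t"
    and z: "length v = 0 \<Longrightarrow> t = 0"
  shows "\<exists>w. w \<in> alloc_set (length v) t \<and> (\<Sum>k<length v. max (v!k - w!k) 0) \<le> max (s - t) 0"
proof (cases "s \<le> t")
  case True
  show ?thesis
  proof (cases "length v = 0")
    case True
    then show ?thesis using z by (intro exI[of _ "[]"]) (auto simp: alloc_set_def)
  next
    case False
    define n where "n = length v"
    define w where "w = map (\<lambda>x. x + (t - s) / n) v"
    have np: "real n > 0" using False n_def by simp
    have "(\<Sum>k<n. w!k) = (\<Sum>k<n. v!k) + real n * ((t - s) / n)"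
      unfolding w_def n_def by (simp add: sum.distrib)
    also have "\<dots> = t" using np s by (simp add: sumlist_idx n_def)
    finally have "w \<in> alloc_set n t"
      using nn True np by (intro alloc_mem) (auto simp: w_def n_def)
    moreover have "(\<Sum>k<length v. max (v!k - w!k) 0) = 0"
      using True np by (intro sum.neutral) (auto simp: w_def n_def)
    ultimately show ?thesis unfolding n_def by (intro exI[of _ w]) auto
  qed
next
  case False
  define w where "w = map (\<lambda>x. x * (t / s)) v"
  have sp: "s > 0" using False t by simp
  have "(\<Sum>k<length v. w!k) = (\<Sum>k<length v. v!k) * (t / s)"
    unfolding w_def by (simp add: sum_distrib_right sum_divide_distrib)
  also have "\<dots> = t" using sp s by (simp add: sumlist_idx)
  finally have mem: "w \<in> alloc_set (length v) t"
    using nn t sp by (intro alloc_mem) (auto simp: w_def)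
  have "(\<Sum>k<length v. max (v!k - w!k) 0) = (\<Sum>k<length v. v!k - v!k * (t / s))"
  proof (rule sum.cong[OF refl])
    fix k assume "k \<in> {..<length v}"
    then have "0 \<le> v!k" using nn by auto
    moreover have "t / s \<le> 1" using False sp by simp
    ultimately have "v!k * (t/s) \<le> v!k" by (metis mult_left_le)
    then show "max (v!k - w!k) 0 = v!k - v!k * (t / s)" using \<open>k \<in> _\<close> by (simp add: w_def)
  qed
  also have "\<dots> = s - t" using sp s by (simp add: sum_subtractf sumlist_idx sum_distrib_right[symmetric] sum_divide_distrib[symmetric])
  finally show ?thesis using mem by (intro exI[of _ w]) auto
qed

theorem mainTheorem3:
  fixes M :: "'a measure" and g :: "real \<Rightarrow> real"
    and X :: "('a \<Rightarrow> real) list" and u c :: real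
  assumes "prob_space M"
    and "\<forall>k<length X. X ! k \<in> borel_measurable M"
    and "\<forall>k<length X. \<forall>\<omega>\<in>space M. 0 \<le> (X ! k) \<omega>"
    and "0 \<le> u"
    and "penalty_fn g"
    and "\<forall>t\<ge>0. \<forall>x\<le>0. g (t * x) = t * g x"
    and "0 \<le> c" and "c \<le> u"
    and "H1 M g ((\<lambda>_. c) # X) u"
    and "H1 M g X (u - c)"
  shows "opt_alloc M g ((\<lambda>_. c) # X) u = c # opt_alloc M g X (u - c)"
proof -
  note P = assms(1) and ms = assms(2) and nn = assms(3) and hom = assms(6)
  have a0: "0 \<le> g (-1)" using assms(5) unfolding penalty_fn_def by auto
  define w where "w = opt_alloc M g X (u - c)"
  have wmin: "is_minimizer M g X (u - c) w"
    unfolding w_def opt_alloc_def using assms(10) unfolding H1_def by (rule theI')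
  have wA: "w \<in> alloc_set (length X) (u - c)" using wmin unfolding is_minimizer_def by auto
  define pA :: real where "pA = (\<integral>\<omega>. indicator {\<omega>. (\<Sum>l<length X. (X!l) \<omega>) \<le> u - c} \<omega> \<partial>M)"
  let ?Y = "(\<lambda>_. c) # X"
  have memY: "c # w \<in> alloc_set (length ?Y) u"
  proof -
    have "length w = length X" "sum_list w = u - c" "\<forall>k<length X. 0 \<le> w!k \<and> w!k \<le> u - c"
      using wA unfolding alloc_set_def by auto
    then show ?thesis using assms(7,8) unfolding alloc_set_def
      by (auto simp: nth_Cons split: nat.splits)
  qed
  have minY: "is_minimizer M g ?Y u (c # w)"
    unfolding is_minimizer_def
  proof (intro conjI ballI memY)
    fix v' assume v': "v' \<in> alloc_set (length ?Y) u"
    then obtain v0 v where vv: "v' = v0 # v" and lv: "length v = length X"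
      unfolding alloc_set_def by (cases v') auto
    have v0: "0 \<le> v0" "v0 \<le> u" using v' vv unfolding alloc_set_def by (auto dest: spec[of _ 0])
    have vnn: "\<forall>k<length v. 0 \<le> v!k"
    proof (intro allI impI)
      fix k assume "k < length v"
      then show "0 \<le> v!k" using v' vv lv unfolding alloc_set_def by (auto dest!: spec[of _ "Suc k"])
    qed
    have vs: "sum_list v = u - v0" using v' vv unfolding alloc_set_def by auto
    have z: "length v = 0 \<Longrightarrow> u - c = 0" using wA lv unfolding alloc_set_def by auto
    obtain w'' where w''A: "w'' \<in> alloc_set (length v) (u - c)"
      and w''r: "(\<Sum>k<length v. max (v!k - w''!k) 0) \<le> max ((u - v0) - (u - c)) 0"
      using L3[OF vnn vs _ z] assms(8) by auto
    have r: "(\<Sum>k<length X. max (v!k - w''!k) 0) \<le> max (c - v0) 0" using w''r lv by simp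
    have "indicator_fn M g ?Y u (c # w) = indicator_fn M g X (u - c) w"
      unfolding L2[OF hom] unfolding L1[OF hom] by simp
    also have "\<dots> \<le> indicator_fn M g X (u - c) w''"
      using wmin w''A lv unfolding is_minimizer_def by auto
    also have "\<dots> = g (-1) * JX M X (u - c) w''" by (rule L1[OF hom])
    also have "\<dots> \<le> g (-1) * (JX M X (u - c) v + max (c - v0) 0 * pA)"
      unfolding pA_def by (intro mult_left_mono a0 Lint[OF P ms nn r])
    also have "\<dots> = indicator_fn M g ?Y u v'"
      unfolding vv L2[OF hom] pA_def by simp
    finally show "indicator_fn M g ?Y u (c # w) \<le> indicator_fn M g ?Y u v'" .
  qed
  have "opt_alloc M g ?Y u = c # w"
    unfolding opt_alloc_def using assms(9) minY unfolding H1_def by (rule the1_equality)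
  then show ?thesis unfolding w_def .
qed

end
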